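(* Let $n\ge1$ and let $c:E_n\to\mathbb C$ be an admissible edge weighting of $Q_n$ with $c(ij)\ne0$ for all $ij\in E_n$. Then there is $\mathbf t\in\Delta_{n-1}$ such that the representation $\rho_c$ is unitarily equivalent to $\rho_{\mathbf t}$.
   Context: For $n\ge1$, identify integers $0\le i<2^n$ with their $n$-digit binary representations $i=\sum_k i_k2^k$; $\mathrm{par}_k(i)=\sum_{r=0}^k i_r\bmod2$, and $i\#k$ is $i$ with its $k$-th digit flipped. The hypercube $Q_n$ has vertex classes $U_n=\{i\mid\mathrm{par}_{n-1}(i)=0\}$, $V_n=\{j\mid\mathrm{par}_{n-1}(j)=1\}$ and edge set $E_n$ of pairs $ij$ ($i\in U_n$, $j\in V_n$, $j=i\#k$ for some $k<n$); $\mathcal N(x)$ denotes neighbors. $C^\ast(Q_n)$ is the universal unital C*-algebra generated by projections $p_x$ with $\sum_{u\in U_n}p_u=1=\sum_{v\in V_n}p_v$ and $p_up_v=0$ for non-adjacent $u,v$. A weighting $c:E_n\to\mathbb C$ (with $c(ij):=0$ for non-adjacent $i,j$) is admissible if $\sum_{i\in\mathcal N(j_1)\cap\mathcal N(j_2)}c(ij_1)\overline{c(ij_2)}=\delta_{j_1j_2}$ for all $j_1,j_2\in V_n(c)$ and $\sum_{j\in\mathcal N(i_1)\cap\mathcal N(i_2)}c(i_1j)\overline{c(i_2j)}=\delta_{i_1i_2}$ for all $i_1,i_2\in U_n(c)$, where $U_n(c),V_n(c)$ are the vertices incident to some edge of nonzero weight. For such $c$, $\rho_c:C^\ast(Q_n)\to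 M_{U_n(c)}$ is the representation with $\rho_c(p_i)=E_{ii}$ ($i\in U_n(c)$), $\rho_c(p_j)=[c(i_1j)\overline{c(i_2j)}]_{i_1,i_2\in U_n(c)}$ ($j\in V_n(c)$), $\rho_c(p_x)=0$ otherwise. $\Delta_{n-1}=\{[t_0,\dots,t_{n-1}]\mid t_k\ge0,\sum t_k=1\}$; for $\mathbf t\in\Delta_{n-1}$, $c_{\mathbf t}(ij)=(-1)^{\mathrm{par}_k(i)}\sqrt{t_k}$ for $i\in U_n$, $j=i\#k$, and $\rho_{\mathbf t}:C^\ast(Q_n)\to M_{U_n}$ is the representation with $\rho_{\mathbf t}(p_i)=E_{ii}$, $\rho_{\mathbf t}(p_j)=[c_{\mathbf t}(i_1j)\overline{c_{\mathbf t}(i_2j)}]_{i_1,i_2\in U_n}$. *)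

theory Defs
  imports Complex_Main
begin

text \<open>Binary digits: i_k is bit i k. par k i = (sum_{r<=k} i_r) mod 2.
  i # k is flip_bit k i.\<close>

definition par :: "nat \<Rightarrow> nat \<Rightarrow> nat" where
  "par k i = (\<Sum>r\<le>k. if bit i r then 1 else 0) mod 2"

definition Uset :: "nat \<Rightarrow> nat set" where
  "Uset n = {i. i < 2 ^ n \<and> par (n - 1) i = 0}"

definition Vset :: "nat \<Rightarrow> nat set" where
  "Vset n = {j. j < 2 ^ n \<and> par (n - 1) j = 1}"

definition edge :: "nat \<Rightarrow> nat \<Rightarrow> nat \<Rightarrow> bool" where
  "edge n i j \<longleftrightarrow> i \<in> Uset n \<and> j \<in> Vset n \<and> (\<exists>k<n. j = flip_bit k i)"

definition nbrs :: "nat \<Rightarrow> nat \<Rightarrow> nat set" where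
  "nbrs n x = {y. edge n x y \<or> edge n y x}"

definition cw :: "nat \<Rightarrow> (nat \<Rightarrow> nat \<Rightarrow> complex) \<Rightarrow> nat \<Rightarrow> nat \<Rightarrow> complex" where
  "cw n c i j = (if edge n i j then c i j else 0)"

definition Uc :: "nat \<Rightarrow> (nat \<Rightarrow> nat \<Rightarrow> complex) \<Rightarrow> nat set" where
  "Uc n c = {i \<in> Uset n. \<exists>j. edge n i j \<and> c i j \<noteq> 0}"

definition Vc :: "nat \<Rightarrow> (nat \<Rightarrow> nat \<Rightarrow> complex) \<Rightarrow> nat set" where
  "Vc n c = {j \<in> Vset n. \<exists>i. edge n i j \<and> c i j \<noteq> 0}"

definition admissible :: "nat \<Rightarrow> (nat \<Rightarrow> nat \<Rightarrow> complex) \<Rightarrow> bool" where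
  "admissible n c \<longleftrightarrow>
     (\<forall>j1\<in>Vc n c. \<forall>j2\<in>Vc n c.
        (\<Sum>i\<in>nbrs n j1 \<inter> nbrs n j2. cw n c i j1 * cnj (cw n c i j2))
          = (if j1 = j2 then 1 else 0)) \<and>
     (\<forall>i1\<in>Uc n c. \<forall>i2\<in>Uc n c.
        (\<Sum>j\<in>nbrs n i1 \<inter> nbrs n i2. cw n c i1 j * cnj (cw n c i2 j))
          = (if i1 = i2 then 1 else 0))"

text \<open>Matrices are functions nat => nat => complex, meaningful on an index set.
  rho_c(p_x) as a matrix indexed by U_n(c) x U_n(c).\<close>
definition rho_c :: "nat \<Rightarrow> (nat \<Rightarrow> nat \<Rightarrow> complex) \<Rightarrow> nat \<Rightarrow> nat \<Rightarrow> nat \<Rightarrow> complex" where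
  "rho_c n c x = (\<lambda>i1 i2.
     if x \<in> Uc n c then (if i1 = x \<and> i2 = x then 1 else 0)
     else if x \<in> Vc n c then cw n c i1 x * cnj (cw n c i2 x)
     else 0)"

definition simplex :: "nat \<Rightarrow> (nat \<Rightarrow> real) set" where
  "simplex n = {t. (\<forall>k<n. 0 \<le> t k) \<and> (\<Sum>k<n. t k) = 1}"

definition c_t :: "nat \<Rightarrow> (nat \<Rightarrow> real) \<Rightarrow> nat \<Rightarrow> nat \<Rightarrow> complex" where
  "c_t n t i j = (\<Sum>k<n. if i \<in> Uset n \<and> j = flip_bit k i
                           then (-1) ^ par k i * complex_of_real (sqrt (t k)) else 0)"

definition rho_t :: "nat \<Rightarrow> (nat \<Rightarrow> real) \<Rightarrow> nat \<Rightarrow> nat \<Rightarrow> nat \<Rightarrow> complex" where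
  "rho_t n t x = (\<lambda>i1 i2.
     if x \<in> Uset n then (if i1 = x \<and> i2 = x then 1 else 0)
     else if x \<in> Vset n then c_t n t i1 x * cnj (c_t n t i2 x)
     else 0)"

text \<open>Unitary equivalence of two representations of C*(Q_n), given by their values
  on the generators p_x (x < 2^n), into M_A and M_B: a unitary W : C^A -> C^B
  (matrix indexed by B x A) with W rho1(p_x) = rho2(p_x) W for all x.
  Since the p_x generate C*(Q_n), this is unitary equivalence of representations.\<close>
definition unitarily_equiv ::
  "nat \<Rightarrow> nat set \<Rightarrow> (nat \<Rightarrow> nat \<Rightarrow> nat \<Rightarrow> complex) \<Rightarrow> nat set \<Rightarrow> (nat \<Rightarrow> nat \<Rightarrow> nat \<Rightarrow> complex) \<Rightarrow> bool" where
  "unitarily_equiv n A r1 B r2 \<longleftrightarrow>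
     (\<exists>W :: nat \<Rightarrow> nat \<Rightarrow> complex.
        (\<forall>a1\<in>A. \<forall>a2\<in>A. (\<Sum>b\<in>B. cnj (W b a1) * W b a2) = (if a1 = a2 then 1 else 0)) \<and>
        (\<forall>b1\<in>B. \<forall>b2\<in>B. (\<Sum>a\<in>A. W b1 a * cnj (W b2 a)) = (if b1 = b2 then 1 else 0)) \<and>
        (\<forall>x<2^n. \<forall>b\<in>B. \<forall>a\<in>A.
            (\<Sum>a'\<in>A. W b a' * r1 x a' a) = (\<Sum>b'\<in>B. r2 x b b' * W b' a)))"

end

theory Submission
  imports Defs
begin


abbreviation fl :: "nat \<Rightarrow> nat \<Rightarrow> nat" where "fl k x \<equiv> flip_bit k x"

lemma fl_fl[simp]: "fl k (fl k x) = x"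
  by (rule bit_eqI) (auto simp: bit_flip_bit_iff)

lemma fl_comm: "fl k (fl l x) = fl l (fl k x)"
  by (rule bit_eqI) (auto simp: bit_flip_bit_iff)

lemma fl_neq[simp]: "fl k x \<noteq> x"
proof
  assume "fl k x = x"
  hence "bit (fl k x) k = bit x k" by simp
  thus False by (simp add: bit_flip_bit_iff)
qed

lemma fl_inj: assumes "fl k x = fl l x" shows "k = l"
proof (rule ccontr)
  assume "k \<noteq> l"
  have "bit (fl k x) k = bit (fl l x) k" using assms by simp
  thus False using \<open>k \<noteq> l\<close> by (simp add: bit_flip_bit_iff)
qed

lemma fl2_neq: "k \<noteq> l \<Longrightarrow> fl k (fl l x) \<noteq> x"
  by (metis fl_fl fl_inj)

lemma fl2_eq: assumes "a \<noteq> b" "fl a (fl b x) = fl k (fl l x)"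
  shows "(a = k \<and> b = l) \<or> (a = l \<and> b = k)"
proof -
  have h: "\<And>p. bit (fl a (fl b x)) p = bit (fl k (fl l x)) p" using assms(2) by simp
  have "bit (fl a (fl b x)) a \<noteq> bit x a" using assms(1) by (simp add: bit_flip_bit_iff)
  hence ha: "a = k \<or> a = l" using h[of a] by (auto simp: bit_flip_bit_iff)
  have "bit (fl a (fl b x)) b \<noteq> bit x b" using assms(1) by (simp add: bit_flip_bit_iff)
  hence hb: "b = k \<or> b = l" using h[of b] by (auto simp: bit_flip_bit_iff)
  show ?thesis using ha hb assms(1) by auto
qed

lemma fl_less: assumes "x < 2 ^ n" "k < n" shows "fl k x < 2 ^ n"
proof -
  have "take_bit n (fl k x) = fl k x"
    using assms by (simp add: take_bit_flip_bit_eq take_bit_nat_eq_self)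
  thus ?thesis by (metis take_bit_nat_less_exp)
qed

lemma par_lt2: "par m x < 2" by (simp add: par_def)

lemma par_fl_le: assumes "k \<le> m" shows "par m (fl k x) = 1 - par m x"
proof -
  let ?f = "\<lambda>y r. (if bit y r then 1 else 0) :: nat"
  have s: "\<And>y. (\<Sum>r\<le>m. ?f y r) = ?f y k + (\<Sum>r\<in>{..m}-{k}. ?f y r)"
    using assms by (subst sum.remove[of _ k]) auto
  have e: "(\<Sum>r\<in>{..m}-{k}. ?f (fl k x) r) = (\<Sum>r\<in>{..m}-{k}. ?f x r)"
    by (rule sum.cong) (auto simp: bit_flip_bit_iff)
  have "?f (fl k x) k + ?f x k = 1" by (auto simp: bit_flip_bit_iff)
  hence "(\<Sum>r\<le>m. ?f (fl k x) r) + (\<Sum>r\<le>m. ?f x r) = 1 + 2 * (\<Sum>r\<in>{..m}-{k}. ?f x r)"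
    using s[of x] s[of "fl k x"] e by simp
  thus ?thesis unfolding par_def by presburger
qed

lemma par_fl_gt: assumes "m < k" shows "par m (fl k x) = par m x"
  unfolding par_def using assms by (intro arg_cong[where f="\<lambda>s. s mod 2"] sum.cong) (auto simp: bit_flip_bit_iff)

lemma take_bit_Suc_fl: "take_bit (Suc m) x = (if bit x m then fl m (take_bit m x) else take_bit m x)"
  by (rule bit_eqI) (auto simp: bit_take_bit_iff bit_flip_bit_iff less_Suc_eq)

lemma take_bit_fl: "take_bit m (fl k x) = (if m \<le> k then take_bit m x else fl k (take_bit m x))"
  by (rule take_bit_flip_bit_eq)

lemma flip_invariant_const:
  assumes "\<And>x l. x < 2 ^ n \<Longrightarrow> l < n \<Longrightarrow> f (fl l x) = f x" "(x::nat) < 2 ^ n"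
  shows "f x = f 0"
proof -
  have "m \<le> n \<Longrightarrow> f (take_bit m x) = f 0" for m
  proof (induction m)
    case 0 then show ?case by simp
  next
    case (Suc m)
    have lt: "take_bit m x < 2 ^ n" using assms(2) take_bit_nat_less_eq_self le_less_trans by blast
    show ?case using Suc assms(1)[OF lt, of m] by (simp add: take_bit_Suc_fl)
  qed
  from this[of n] assms(2) show ?thesis by (simp add: take_bit_nat_eq_self)
qed



lemma fl_cancel[simp]: "fl l (fl k (fl l x)) = fl k x"
  by (metis fl_comm fl_fl)

lemma par_cases: "par m x = 0 \<or> par m x = 1"
  using par_lt2[of m x] by linarith

lemma U_fl: "x \<in> Uset n \<Longrightarrow> k < n \<Longrightarrow> fl k x \<in> Vset n"
  unfolding Uset_def Vset_def by (auto simp: fl_less par_fl_le)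

lemma V_fl: "x \<in> Vset n \<Longrightarrow> k < n \<Longrightarrow> fl k x \<in> Uset n"
  unfolding Uset_def Vset_def by (auto simp: fl_less par_fl_le)

lemma UV_disj: "x \<in> Uset n \<Longrightarrow> x \<notin> Vset n"
  unfolding Uset_def Vset_def by auto

lemma lt_UV: "x < 2 ^ n \<Longrightarrow> x \<in> Uset n \<or> x \<in> Vset n"
  unfolding Uset_def Vset_def using par_cases by auto

lemma U_lt: "x \<in> Uset n \<Longrightarrow> x < 2 ^ n" unfolding Uset_def by auto
lemma V_lt: "x \<in> Vset n \<Longrightarrow> x < 2 ^ n" unfolding Vset_def by auto

lemma U_fl2: "x \<in> Uset n \<Longrightarrow> k < n \<Longrightarrow> l < n \<Longrightarrow> fl k (fl l x) \<in> Uset n"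
  by (simp add: U_fl V_fl)

lemma edge_iff: "edge n i j \<longleftrightarrow> i \<in> Uset n \<and> (\<exists>k<n. j = fl k i)"
  unfolding edge_def using U_fl by blast

lemma edge_fl: "i \<in> Uset n \<Longrightarrow> k < n \<Longrightarrow> edge n i (fl k i)"
  by (auto simp: edge_iff)

lemma nbrs_sub: assumes "w \<in> nbrs n x" shows "\<exists>a<n. w = fl a x"
  using assms unfolding nbrs_def edge_iff by auto

lemma nbrs_fl: assumes "x < 2 ^ n" "k < n" shows "fl k x \<in> nbrs n x"
  using lt_UV[OF assms(1)] assms unfolding nbrs_def
  by (auto simp: edge_iff V_fl intro: exI[of _ k])

lemma nbrs_common:
  assumes "x < 2 ^ n" "k < n" "l < n" "k \<noteq> l"
  shows "nbrs n x \<inter> nbrs n (fl k (fl l x)) = {fl k x, fl l x}"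
proof
  show "nbrs n x \<inter> nbrs n (fl k (fl l x)) \<subseteq> {fl k x, fl l x}"
  proof
    fix w assume w: "w \<in> nbrs n x \<inter> nbrs n (fl k (fl l x))"
    then obtain a where a: "w = fl a x" using nbrs_sub by blast
    from w obtain b where b: "w = fl b (fl k (fl l x))" using nbrs_sub by blast
    have e: "fl b (fl a x) = fl k (fl l x)" using a b by (metis fl_fl)
    have "a \<noteq> b" using e fl2_neq[OF assms(4), of x] by auto
    from fl2_eq[OF this[symmetric] e] show "w \<in> {fl k x, fl l x}" using a by auto
  qed
next
  have x2: "fl k (fl l x) < 2 ^ n" using assms by (simp add: fl_less)
  have 1: "fl k x \<in> nbrs n (fl k (fl l x))"
    using nbrs_fl[OF x2 assms(3)] by (simp add: fl_comm[of l k])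
  have 2: "fl l x \<in> nbrs n (fl k (fl l x))"
    using nbrs_fl[OF x2 assms(2)] by simp
  show "{fl k x, fl l x} \<subseteq> nbrs n x \<inter> nbrs n (fl k (fl l x))"
    using 1 2 nbrs_fl assms by auto
qed

locale adm =
  fixes n :: nat and c :: "nat \<Rightarrow> nat \<Rightarrow> complex"
  assumes n1: "n \<ge> 1" and adm: "admissible n c"
    and nz: "\<And>i j. edge n i j \<Longrightarrow> c i j \<noteq> 0"
begin

lemma Uc_eq: "Uc n c = Uset n"
proof -
  have "\<exists>j. edge n i j \<and> c i j \<noteq> 0" if "i \<in> Uset n" for i
    using edge_fl[OF that, of 0] n1 nz by auto
  thus ?thesis unfolding Uc_def by auto
qed

lemma Vc_eq: "Vc n c = Vset n"
proof -
  have "\<exists>i. edge n i j \<and> c i j \<noteq> 0" if "j \<in> Vset n" for j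
  proof -
    have "fl 0 j \<in> Uset n" using V_fl[OF that] n1 by simp
    hence "edge n (fl 0 j) j" using edge_fl[of "fl 0 j" n 0] n1 by simp
    thus ?thesis using nz by blast
  qed
  thus ?thesis unfolding Vc_def by auto
qed

lemma cw_edge: "edge n i j \<Longrightarrow> cw n c i j = c i j" by (simp add: cw_def)

lemma sqR:
  assumes i: "i \<in> Uset n" and kl: "k < n" "l < n" "k \<noteq> l"
  shows "c i (fl k i) * cnj (c (fl k (fl l i)) (fl k i)) + c i (fl l i) * cnj (c (fl k (fl l i)) (fl l i)) = 0"
proof -
  let ?i2 = "fl k (fl l i)"
  have i2: "?i2 \<in> Uset n" using U_fl2 i kl by blast
  have ne: "i \<noteq> ?i2" using fl2_neq[OF kl(3)] by metis
  have "(\<Sum>j\<in>nbrs n i \<inter> nbrs n ?i2. cw n c i j * cnj (cw n c ?i2 j)) = 0"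
    using adm ne i i2 unfolding admissible_def Uc_eq by auto
  moreover have "nbrs n i \<inter> nbrs n ?i2 = {fl k i, fl l i}"
    using nbrs_common[OF U_lt[OF i] kl] .
  moreover have "fl k i \<noteq> fl l i" using fl_inj kl(3) by blast
  moreover have "edge n i (fl k i)" "edge n i (fl l i)" using edge_fl i kl by auto
  moreover have "edge n ?i2 (fl k i)" using edge_fl[OF i2 kl(2)] by (simp add: fl_comm[of l k])
  moreover have "edge n ?i2 (fl l i)" using edge_fl[OF i2 kl(1)] by simp
  ultimately show ?thesis by (simp add: cw_edge)
qed

lemma sqC:
  assumes i: "i \<in> Uset n" and kl: "k < n" "l < n" "k \<noteq> l"
  shows "c i (fl k i) * cnj (c i (fl l i)) + c (fl k (fl l i)) (fl k i) * cnj (c (fl k (fl l i)) (fl l i)) = 0"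
proof -
  let ?i2 = "fl k (fl l i)"
  let ?j1 = "fl k i" and ?j2 = "fl l i"
  have i2: "?i2 \<in> Uset n" using U_fl2 i kl by blast
  have j1: "?j1 \<in> Vset n" "?j2 \<in> Vset n" using U_fl i kl by auto
  have ne: "?j1 \<noteq> ?j2" using fl_inj kl(3) by blast
  have "(\<Sum>x\<in>nbrs n ?j1 \<inter> nbrs n ?j2. cw n c x ?j1 * cnj (cw n c x ?j2)) = 0"
    using adm ne j1 unfolding admissible_def Vc_eq by auto
  moreover have "?j2 = fl k (fl l ?j1)" by (simp add: fl_comm[of k l])
  hence "nbrs n ?j1 \<inter> nbrs n ?j2 = {fl k ?j1, fl l ?j1}"
    using nbrs_common[OF V_lt[OF j1(1)] kl] by simp
  moreover have "fl l ?j1 = ?i2" by (simp add: fl_comm[of k l])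
  moreover have "i \<noteq> ?i2" using fl2_neq[OF kl(3)] by metis
  moreover have "edge n i (fl k i)" "edge n i (fl l i)" using edge_fl i kl by auto
  moreover have "edge n ?i2 (fl k i)" using edge_fl[OF i2 kl(2)] by (simp add: fl_comm[of l k])
  moreover have "edge n ?i2 (fl l i)" using edge_fl[OF i2 kl(1)] by simp
  ultimately show ?thesis by (simp add: cw_edge)
qed

end


declare flip_bit_of_0[simp del]

lemma sq_alg:
  fixes a b d e :: complex
  assumes nz: "a \<noteq> 0" "b \<noteq> 0" "d \<noteq> 0" "e \<noteq> 0"
    and R: "a * cnj d + b * cnj e = 0" and C: "a * cnj b + d * cnj e = 0"
  shows "cmod a = cmod e" "cmod b = cmod d" "a * e * (cmod b)\<^sup>2 = - (b * d * (cmod e)\<^sup>2)"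
proof -
  have R': "cmod a * cmod d = cmod b * cmod e"
    using arg_cong[OF R[unfolded add_eq_0_iff2], of cmod] by (simp add: norm_mult)
  have C': "cmod a * cmod b = cmod d * cmod e"
    using arg_cong[OF C[unfolded add_eq_0_iff2], of cmod] by (simp add: norm_mult)
  have pos: "cmod a > 0" "cmod b > 0" "cmod d > 0" "cmod e > 0" using nz by auto
  have "(cmod a)\<^sup>2 * (cmod b * cmod d) = (cmod e)\<^sup>2 * (cmod b * cmod d)"
  proof -
    have "(cmod a)\<^sup>2 * (cmod b * cmod d) = (cmod a * cmod d) * (cmod a * cmod b)"
      by (simp add: power2_eq_square)
    also have "\<dots> = (cmod b * cmod e) * (cmod d * cmod e)" using R' C' by simp
    finally show ?thesis by (simp add: power2_eq_square)
  qed
  hence "(cmod a)\<^sup>2 = (cmod e)\<^sup>2" using pos by simp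
  thus ae: "cmod a = cmod e" using pos by (simp add: power2_eq_iff)
  show "cmod b = cmod d" using R' ae pos by (metis mult.commute mult_left_cancel order_less_irrefl)
  have "a * cnj b * (b * e) = - (d * cnj e) * (b * e)" using C by (simp add: add_eq_0_iff2)
  hence "a * e * (b * cnj b) = - (b * d * (e * cnj e))" by (simp add: algebra_simps)
  thus "a * e * (cmod b)\<^sup>2 = - (b * d * (cmod e)\<^sup>2)"
    by (simp only: complex_norm_square)
qed

lemma unit_sq:
  fixes za zb zd ze :: complex
  assumes "cmod za = 1" "cmod zb = 1" "cmod zd = 1" "cmod ze = 1" "za * ze = zb * zd"
  shows "za * cnj zd = zb * cnj ze" "cnj za * zb = cnj zd * ze"
proof -
  have u: "z * cnj z = 1" if "cmod z = 1" for z :: complex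
    using that complex_norm_square[of z] by simp
  have "za * cnj zd = za * cnj zd * (ze * cnj ze)" using u[OF assms(4)] by simp
  also have "\<dots> = (za * ze) * cnj zd * cnj ze" by (simp add: algebra_simps)
  also have "\<dots> = zb * (zd * cnj zd) * cnj ze" using assms(5) by (simp add: algebra_simps)
  finally show "za * cnj zd = zb * cnj ze" using u[OF assms(3)] by simp
  have "cnj za * zb = cnj za * zb * (zd * cnj zd)" using u[OF assms(3)] by simp
  also have "\<dots> = cnj za * (zb * zd) * cnj zd" by (simp add: algebra_simps)
  also have "\<dots> = (za * cnj za) * ze * cnj zd" using assms(5) by (simp add: algebra_simps)
  finally show "cnj za * zb = cnj zd * ze" using u[OF assms(1)] by (simp add: mult.commute)
qed

context adm begin

lemma zero_U: "0 \<in> Uset n" unfolding Uset_def par_def by simp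

lemma sq_facts:
  assumes i: "i \<in> Uset n" and kl: "k < n" "l < n" "k \<noteq> l"
  shows "cmod (c i (fl k i)) = cmod (c (fl k (fl l i)) (fl l i))"
    "cmod (c i (fl l i)) = cmod (c (fl k (fl l i)) (fl k i))"
    "c i (fl k i) * c (fl k (fl l i)) (fl l i) * (cmod (c i (fl l i)))\<^sup>2
       = - (c i (fl l i) * c (fl k (fl l i)) (fl k i) * (cmod (c (fl k (fl l i)) (fl l i)))\<^sup>2)"
proof -
  have i2: "fl k (fl l i) \<in> Uset n" using U_fl2 i kl by blast
  have e: "edge n i (fl k i)" "edge n i (fl l i)" using edge_fl i kl by auto
  have e2: "edge n (fl k (fl l i)) (fl k i)" using edge_fl[OF i2 kl(2)] by (simp add: fl_comm[of l k])
  have e3: "edge n (fl k (fl l i)) (fl l i)" using edge_fl[OF i2 kl(1)] by simp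
  note s = sq_alg[OF nz[OF e(1)] nz[OF e(2)] nz[OF e2] nz[OF e3] sqR[OF assms] sqC[OF assms]]
  show "cmod (c i (fl k i)) = cmod (c (fl k (fl l i)) (fl l i))"
    "cmod (c i (fl l i)) = cmod (c (fl k (fl l i)) (fl k i))"
    "c i (fl k i) * c (fl k (fl l i)) (fl l i) * (cmod (c i (fl l i)))\<^sup>2
       = - (c i (fl l i) * c (fl k (fl l i)) (fl k i) * (cmod (c (fl k (fl l i)) (fl l i)))\<^sup>2)"
    using s by auto
qed

definition M :: "nat \<Rightarrow> nat \<Rightarrow> real" where
  "M x k = (if x \<in> Uset n then cmod (c x (fl k x)) else cmod (c (fl k x) x))"

lemma M_fl: assumes x: "x < 2 ^ n" and k: "k < n" and l: "l < n" shows "M (fl l x) k = M x k"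
proof (cases "l = k")
  case True
  show ?thesis using lt_UV[OF x] True k U_fl[of x n k] V_fl[of x n k] UV_disj[of "fl k x" n] UV_disj[of x n]
    by (auto simp: M_def)
next
  case False
  hence kl: "k \<noteq> l" "l \<noteq> k" by auto
  show ?thesis
  proof (cases "x \<in> Uset n")
    case True
    have "fl l x \<in> Vset n" using U_fl True l by blast
    hence "M (fl l x) k = cmod (c (fl k (fl l x)) (fl l x))" by (auto simp: M_def dest: UV_disj)
    also have "\<dots> = M x k" using sq_facts(1)[OF True k l kl(1)] True
      by (simp add: M_def)
    finally show ?thesis .
  next
    case False
    hence xv: "x \<in> Vset n" using lt_UV x by blast
    have u: "fl l x \<in> Uset n" using V_fl xv l by blast
    have "M (fl l x) k = cmod (c (fl l x) (fl k (fl l x)))" using u by (simp add: M_def)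
    also have "\<dots> = cmod (c (fl k (fl l (fl l x))) (fl l (fl l x)))"
      using sq_facts(1)[OF u k l kl(1)] by simp
    also have "\<dots> = M x k" using False by (simp add: M_def)
    finally show ?thesis .
  qed
qed

lemma M_const: "x < 2 ^ n \<Longrightarrow> k < n \<Longrightarrow> M x k = M 0 k"
  using flip_invariant_const[of n "\<lambda>x. M x k"] M_fl by blast

definition t :: "nat \<Rightarrow> real" where "t k = (cmod (c 0 (fl k 0)))\<^sup>2"

lemma mod_c: assumes "i \<in> Uset n" "k < n" shows "cmod (c i (fl k i)) = sqrt (t k)"
proof -
  have "cmod (c i (fl k i)) = M i k" using assms by (simp add: M_def)
  also have "\<dots> = M 0 k" using M_const U_lt assms by blast
  also have "\<dots> = sqrt (t k)" using zero_U by (simp add: M_def t_def)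
  finally show ?thesis .
qed

lemma t_pos: "k < n \<Longrightarrow> t k > 0"
  using nz[OF edge_fl[OF zero_U]] by (simp add: t_def)

lemma t_simplex: "t \<in> simplex n"
proof -
  have "\<forall>i1\<in>Uset n. \<forall>i2\<in>Uset n. (\<Sum>j\<in>nbrs n i1 \<inter> nbrs n i2. cw n c i1 j * cnj (cw n c i2 j))
          = (if i1 = i2 then 1 else 0)" using adm unfolding admissible_def Uc_eq by blast
  note row = this
  have "(\<Sum>j\<in>nbrs n 0 \<inter> nbrs n 0. cw n c 0 j * cnj (cw n c 0 j)) = 1"
    using bspec[OF bspec[OF row zero_U] zero_U] by simp
  moreover have nb: "nbrs n 0 = (\<lambda>k. fl k 0) ` {..<n}"
  proof
    show "nbrs n 0 \<subseteq> (\<lambda>k. fl k 0) ` {..<n}" using nbrs_sub by blast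
    show "(\<lambda>k. fl k 0) ` {..<n} \<subseteq> nbrs n 0" using nbrs_fl[of 0 n] by auto
  qed
  moreover have "inj_on (\<lambda>k. fl k 0) {..<n}" by (meson fl_inj inj_onI)
  ultimately have "(\<Sum>k<n. cw n c 0 (fl k 0) * cnj (cw n c 0 (fl k 0))) = 1"
    by (simp add: sum.reindex)
  moreover have "cw n c 0 (fl k 0) * cnj (cw n c 0 (fl k 0)) = of_real (t k)" if "k < n" for k
    using edge_fl[OF zero_U that] by (simp add: cw_edge t_def complex_norm_square[symmetric])
  ultimately have "(\<Sum>k<n. complex_of_real (t k)) = 1" by simp
  hence "(\<Sum>k<n. t k) = 1" by (metis of_real_eq_1_iff of_real_sum)
  moreover have "\<forall>k<n. 0 \<le> t k" by (simp add: t_def)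
  ultimately show ?thesis by (simp add: simplex_def)
qed

end


lemma sign4:
  assumes "k \<noteq> l"
  shows "((-1::complex) ^ par k u) * (-1) ^ par k (fl k (fl l u)) * (-1) ^ par l u * (-1) ^ par l (fl k (fl l u)) = -1"
proof -
  have pk: "par k u < 2" "par l u < 2" using par_lt2 by auto
  have "odd (par k u + par k (fl k (fl l u)) + par l u + par l (fl k (fl l u)))"
  proof (cases "k < l")
    case True
    have "par k (fl k (fl l u)) = 1 - par k u" using True by (simp add: par_fl_le par_fl_gt)
    moreover have "par l (fl k (fl l u)) = par l u" using True pk by (simp add: par_fl_le par_fl_gt)
    ultimately show ?thesis using pk by simp
  next
    case False
    hence lk: "l < k" using assms by simp
    have "par k (fl k (fl l u)) = par k u" using lk pk by (simp add: par_fl_le par_fl_gt)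
    moreover have "par l (fl k (fl l u)) = 1 - par l u" using lk
      by (simp add: par_fl_le par_fl_gt fl_comm[of k l])
    ultimately show ?thesis using pk by simp
  qed
  thus ?thesis by (simp add: power_add[symmetric])
qed

context adm begin

definition s :: "nat \<Rightarrow> nat \<Rightarrow> complex" where "s k x = (-1) ^ par k x"

lemma s_sq: "s k x * s k x = 1" by (simp add: s_def power_add[symmetric])

lemma ct_fl: assumes "i \<in> Uset n" "k < n"
  shows "c_t n t i (fl k i) = s k i * of_real (sqrt (t k))"
proof -
  have e: "(fl k i = fl k' i) = (k' = k)" for k' using fl_inj by blast
  show ?thesis using assms unfolding c_t_def s_def by (simp add: e)
qed

lemma ct_zero: assumes "\<not> (\<exists>k<n. j = fl k i)" shows "c_t n t i j = 0"
  using assms unfolding c_t_def by (intro sum.neutral) auto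

lemma ct_nz: assumes "i \<in> Uset n" "k < n" shows "c_t n t i (fl k i) \<noteq> 0"
  using ct_fl[OF assms] t_pos[OF assms(2)] by (simp add: s_def)

lemma ct_mod: assumes "i \<in> Uset n" "k < n" shows "cmod (c_t n t i (fl k i)) = sqrt (t k)"
  using ct_fl[OF assms] t_pos[OF assms(2)] by (simp add: s_def norm_mult norm_power)

definition D :: "nat \<Rightarrow> nat \<Rightarrow> complex" where "D i j = c i j / c_t n t i j"

lemma D_unit: assumes "i \<in> Uset n" "k < n" shows "cmod (D i (fl k i)) = 1"
  using mod_c[OF assms] ct_mod[OF assms] t_pos[OF assms(2)] by (simp add: D_def norm_divide)

lemma D_sq:
  assumes u: "u \<in> Uset n" and kl: "k < n" "l < n" "k \<noteq> l"
  shows "D u (fl k u) * D (fl k (fl l u)) (fl l u) = D u (fl l u) * D (fl k (fl l u)) (fl k u)"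
proof -
  define u2 where "u2 = fl k (fl l u)"
  have u2: "u2 \<in> Uset n" using U_fl2 u kl unfolding u2_def by blast
  define a where "a = c u (fl k u)"
  define b where "b = c u (fl l u)"
  define d where "d = c u2 (fl k u)"
  define e where "e = c u2 (fl l u)"
  define tk where "tk = complex_of_real (sqrt (t k))"
  define tl where "tl = complex_of_real (sqrt (t l))"
  have tk: "tk * tk = of_real (t k)" "tk \<noteq> 0" using t_pos[OF kl(1)] unfolding tk_def
    by (simp_all flip: of_real_mult)
  have tl: "tl * tl = of_real (t l)" "tl \<noteq> 0" using t_pos[OF kl(2)] unfolding tl_def
    by (simp_all flip: of_real_mult)
  have at: "c_t n t u (fl k u) = s k u * tk" using ct_fl[OF u kl(1)] tk_def by simp
  have bt: "c_t n t u (fl l u) = s l u * tl" using ct_fl[OF u kl(2)] tl_def by simp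
  have dt: "c_t n t u2 (fl k u) = s l u2 * tl" using ct_fl[OF u2 kl(2)] tl_def unfolding u2_def by simp
  have et: "c_t n t u2 (fl l u) = s k u2 * tk" using ct_fl[OF u2 kl(1)] tl_def tk_def unfolding u2_def by simp
  have sf: "cmod a = cmod e" "a * e * (cmod b)\<^sup>2 = - (b * d * (cmod e)\<^sup>2)"
    using sq_facts[OF u kl] unfolding a_def b_def d_def e_def u2_def by auto
  have mb: "(cmod b)\<^sup>2 = t l" using mod_c[OF u kl(2)] t_pos[OF kl(2)] unfolding b_def by simp
  have me: "(cmod e)\<^sup>2 = t k" using mod_c[OF u kl(1)] t_pos[OF kl(1)] sf(1) unfolding a_def by simp
  have key: "a * e * of_real (t l) = - (b * d * of_real (t k))"
    using sf(2) unfolding mb me .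
  have S: "(s k u * s k u2) * (s l u * s l u2) = -1"
    using sign4[OF kl(3), of u] unfolding s_def u2_def by (simp add: algebra_simps)
  have sl: "(s l u * s l u2) * (s l u * s l u2) = 1" using s_sq[of l u] s_sq[of l u2]
    by (simp add: algebra_simps)
  have sk: "s k u * s k u2 = - (s l u * s l u2)"
  proof -
    have "s k u * s k u2 = (s k u * s k u2) * ((s l u * s l u2) * (s l u * s l u2))" using sl by simp
    also have "\<dots> = ((s k u * s k u2) * (s l u * s l u2)) * (s l u * s l u2)" by (simp only: mult.assoc)
    finally show ?thesis using S by simp
  qed
  have nzs: "s k u \<noteq> 0" "s l u \<noteq> 0" "s k u2 \<noteq> 0" "s l u2 \<noteq> 0" by (simp_all add: s_def)
  have "a * e * (s l u * tl * (s l u2 * tl)) = b * d * (s k u * tk * (s k u2 * tk))"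
  proof -
    have "a * e * (s l u * tl * (s l u2 * tl)) = (s l u * s l u2) * (a * e * of_real (t l))"
      using tl by (simp add: algebra_simps)
    also have "\<dots> = - (s l u * s l u2) * (b * d * of_real (t k))" using key by simp
    also have "\<dots> = (s k u * s k u2) * (b * d * (tk * tk))" using sk tk by simp
    finally show ?thesis by (simp add: algebra_simps)
  qed
  hence "a / (s k u * tk) * (e / (s k u2 * tk)) = b / (s l u * tl) * (d / (s l u2 * tl))"
    using nzs tk tl by (simp add: field_simps)
  thus ?thesis unfolding D_def using at bt dt et
    unfolding a_def b_def d_def e_def u2_def by simp
qed

end


primrec Pm :: "(nat \<Rightarrow> nat \<Rightarrow> complex) \<Rightarrow> nat \<Rightarrow> nat \<Rightarrow> complex" where
  "Pm g 0 x = 1"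
| "Pm g (Suc m) x = Pm g m x * (if bit x m then g (take_bit m x) (fl m (take_bit m x)) else 1)"

lemma Pm_high: "m \<le> k \<Longrightarrow> Pm g m (fl k x) = Pm g m x"
proof (induction m)
  case 0 then show ?case by simp
next
  case (Suc m)
  have "bit (fl k x) m = bit x m" using Suc.prems by (simp add: bit_flip_bit_iff)
  moreover have "take_bit m (fl k x) = take_bit m x" using Suc.prems by (simp add: take_bit_fl)
  ultimately show ?case using Suc by simp
qed

lemma tb_lt: "m \<le> n \<Longrightarrow> take_bit m (x::nat) < 2 ^ n"
  by (meson order_less_le_trans one_le_numeral power_increasing take_bit_nat_less_exp)

lemma Pm_fl:
  assumes g1: "\<And>y k. y < 2 ^ n \<Longrightarrow> k < n \<Longrightarrow> g y (fl k y) * g (fl k y) y = 1"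
    and g2: "\<And>y k l. y < 2 ^ n \<Longrightarrow> k < n \<Longrightarrow> l < n \<Longrightarrow> k \<noteq> l \<Longrightarrow>
       g y (fl k y) * g (fl k y) (fl l (fl k y)) = g y (fl l y) * g (fl l y) (fl k (fl l y))"
  shows "m \<le> n \<Longrightarrow> k < m \<Longrightarrow> Pm g m (fl k x) = Pm g m x * g (take_bit m x) (take_bit m (fl k x))"
proof (induction m arbitrary: k)
  case 0 then show ?case by simp
next
  case (Suc m)
  define y where "y = take_bit m x"
  have y: "y < 2 ^ n" unfolding y_def using Suc.prems tb_lt by simp
  have mn: "m < n" using Suc.prems by simp
  show ?case
  proof (cases "k = m")
    case True
    have hp: "Pm g m (fl m x) = Pm g m x" by (rule Pm_high) simp
    show ?thesis
    proof (cases "bit x m")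
      case b: True
      have "take_bit (Suc m) x = fl m y" using b by (simp add: take_bit_Suc_fl y_def)
      moreover have "take_bit (Suc m) (fl m x) = y"
        by (simp add: take_bit_fl take_bit_Suc_fl b y_def)
      moreover have "bit (fl m x) m = False" using b by (simp add: bit_flip_bit_iff)
      moreover have "g y (fl m y) * g (fl m y) y = 1" using g1[OF y mn] .
      ultimately show ?thesis using True hp b by (simp add: y_def[symmetric] mult.assoc)
    next
      case b: False
      have "take_bit (Suc m) x = y" using b by (simp add: take_bit_Suc_fl y_def)
      moreover have "take_bit (Suc m) (fl m x) = fl m y"
        by (simp add: take_bit_fl take_bit_Suc_fl b y_def)
      moreover have "bit (fl m x) m = True" using b by (simp add: bit_flip_bit_iff)
      moreover have "take_bit m (fl m x) = y" by (simp add: take_bit_fl y_def)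
      ultimately show ?thesis using True hp b by (simp add: y_def[symmetric])
    qed
  next
    case False
    hence km: "k < m" using Suc.prems by simp
    have IH: "Pm g m (fl k x) = Pm g m x * g y (fl k y)"
      using Suc.IH[OF _ km] Suc.prems km by (simp add: take_bit_fl y_def)
    have bb: "bit (fl k x) m = bit x m" using km by (simp add: bit_flip_bit_iff)
    have tk: "take_bit m (fl k x) = fl k y" using km by (simp add: take_bit_fl y_def)
    show ?thesis
    proof (cases "bit x m")
      case b: True
      have t1: "take_bit (Suc m) x = fl m y" using b by (simp add: take_bit_Suc_fl y_def)
      have t2: "take_bit (Suc m) (fl k x) = fl k (fl m y)" using km t1 by (simp add: take_bit_fl)
      have "Pm g (Suc m) (fl k x) = Pm g m x * (g y (fl k y) * g (fl k y) (fl m (fl k y)))"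
        using IH bb b tk by (simp add: mult.assoc)
      also have "\<dots> = Pm g m x * (g y (fl m y) * g (fl m y) (fl k (fl m y)))"
        using g2[OF y _ mn, of k] km Suc.prems by simp
      also have "\<dots> = Pm g (Suc m) x * g (take_bit (Suc m) x) (take_bit (Suc m) (fl k x))"
        using b t1 t2 by (simp add: y_def[symmetric] mult.assoc)
      finally show ?thesis .
    next
      case b: False
      have t1: "take_bit (Suc m) x = y" using b by (simp add: take_bit_Suc_fl y_def)
      have t2: "take_bit (Suc m) (fl k x) = fl k y" using km t1 by (simp add: take_bit_fl)
      show ?thesis using IH bb b t1 t2 by simp
    qed
  qed
qed

lemma Pm_unit:
  assumes g3: "\<And>y k. y < 2 ^ n \<Longrightarrow> k < n \<Longrightarrow> cmod (g y (fl k y)) = 1"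
  shows "m \<le> n \<Longrightarrow> cmod (Pm g m x) = 1"
proof (induction m)
  case 0 then show ?case by simp
next
  case (Suc m)
  have "take_bit m x < 2 ^ n" using Suc.prems tb_lt by simp
  then show ?case using Suc g3[of "take_bit m x" m] by (simp add: norm_mult)
qed

context adm begin

definition g :: "nat \<Rightarrow> nat \<Rightarrow> complex" where
  "g x y = (if x \<in> Uset n then D x y else cnj (D y x))"

lemma g3: assumes x: "x < 2 ^ n" and k: "k < n" shows "cmod (g x (fl k x)) = 1"
proof (cases "x \<in> Uset n")
  case True then show ?thesis using D_unit k by (simp add: g_def)
next
  case False
  hence "fl k x \<in> Uset n" using lt_UV[OF x] V_fl k by blast
  then show ?thesis using D_unit[of "fl k x" k] k False by (simp add: g_def)
qed

lemma g1: assumes x: "x < 2 ^ n" and k: "k < n" shows "g x (fl k x) * g (fl k x) x = 1"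
proof -
  have u: "z * cnj z = 1" "cnj z * z = 1" if "cmod z = 1" for z :: complex
    using that complex_norm_square[of z] by (simp_all add: mult.commute)
  show ?thesis
  proof (cases "x \<in> Uset n")
    case True
    hence "fl k x \<notin> Uset n" using U_fl k UV_disj by blast
    then show ?thesis using True u(1)[OF D_unit[OF True k]] by (simp add: g_def)
  next
    case False
    hence f: "fl k x \<in> Uset n" using lt_UV[OF x] V_fl k by blast
    then show ?thesis using False u(2)[OF D_unit[OF f k]] by (simp add: g_def)
  qed
qed

lemma g2: assumes x: "x < 2 ^ n" and kl: "k < n" "l < n" "k \<noteq> l"
  shows "g x (fl k x) * g (fl k x) (fl l (fl k x)) = g x (fl l x) * g (fl l x) (fl k (fl l x))"
proof (cases "x \<in> Uset n")
  case True
  have nk: "fl k x \<notin> Uset n" "fl l x \<notin> Uset n" using U_fl kl True UV_disj by blast+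
  have u2: "fl k (fl l x) \<in> Uset n" using U_fl2 True kl by blast
  have "D x (fl k x) * cnj (D (fl k (fl l x)) (fl k x)) = D x (fl l x) * cnj (D (fl k (fl l x)) (fl l x))"
    apply (rule unit_sq(1))
    using D_unit[OF True kl(1)] D_unit[OF True kl(2)] D_unit[OF u2 kl(2)] D_unit[OF u2 kl(1)]
      D_sq[OF True kl] by (simp_all add: fl_comm[of l k])
  then show ?thesis using True nk by (simp add: g_def fl_comm[of l k])
next
  case False
  have xv: "x \<in> Vset n" using lt_UV[OF x] False by blast
  define u where "u = fl k x"
  have u: "u \<in> Uset n" using V_fl xv kl unfolding u_def by blast
  have lx: "fl l x \<in> Uset n" using V_fl xv kl by blast
  have x': "x = fl k u" unfolding u_def by simp
  have "fl l u \<notin> Uset n" "fl k (fl l x) \<notin> Uset n" using U_fl u lx kl UV_disj by blast+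
  moreover have "cnj (D u x) * D u (fl l u) = cnj (D (fl l x) x) * D (fl l x) (fl k (fl l x))"
    apply (rule unit_sq(2))
    using D_unit[OF u kl(1)] D_unit[OF u kl(2)] D_unit[OF lx kl(2)] D_unit[OF lx kl(1)]
      D_sq[OF u kl] by (simp_all add: u_def fl_comm[of l k])
  ultimately show ?thesis using False u lx unfolding u_def by (simp add: g_def)
qed

definition P :: "nat \<Rightarrow> complex" where "P = Pm g n"

lemma P_unit: "cmod (P x) = 1"
  unfolding P_def by (rule Pm_unit[of n g]) (auto intro: g3)

lemma P_fl: assumes "x < 2 ^ n" "k < n" shows "P (fl k x) = P x * g x (fl k x)"
proof -
  have "P (fl k x) = P x * g (take_bit n x) (take_bit n (fl k x))"
    unfolding P_def by (rule Pm_fl[of n g]) (auto intro: g1 g2 assms)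
  thus ?thesis using assms by (simp add: take_bit_nat_eq_self fl_less)
qed

lemma c_edge: assumes u: "u \<in> Uset n" and k: "k < n"
  shows "c u (fl k u) = cnj (P u) * P (fl k u) * c_t n t u (fl k u)"
proof -
  have "cnj (P u) * P (fl k u) = (cnj (P u) * P u) * D u (fl k u)"
    using P_fl[OF U_lt[OF u] k] u by (simp add: g_def mult.assoc)
  also have "cnj (P u) * P u = 1" using P_unit[of u] complex_norm_square[of "P u"] by (simp add: mult.commute)
  finally show ?thesis using ct_nz[OF u k] by (simp add: D_def)
qed

end


context adm begin

lemma unitP: "P x * cnj (P x) = 1" "cnj (P x) * P x = 1"
  using P_unit[of x] complex_norm_square[of "P x"] by (simp_all add: mult.commute)

lemma c_all: assumes i: "i \<in> Uset n" and x: "x \<in> Vset n"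
  shows "cw n c i x = cnj (P i) * P x * c_t n t i x"
proof (cases "\<exists>k<n. x = fl k i")
  case True
  then obtain k where k: "k < n" "x = fl k i" by blast
  then show ?thesis using c_edge[OF i k(1)] edge_fl[OF i k(1)] by (simp add: cw_edge)
next
  case False
  then show ?thesis using ct_zero[OF False] False by (auto simp: cw_def edge_iff)
qed

lemma finU: "finite (Uset n)"
  by (rule finite_subset[of _ "{..<2^n}"]) (auto simp: Uset_def)

lemma main: "unitarily_equiv n (Uc n c) (rho_c n c) (Uset n) (rho_t n t)"
  unfolding unitarily_equiv_def Uc_eq
proof (intro exI[of _ "\<lambda>b a. if b = a then P a else 0"] conjI ballI allI impI)
  fix a1 a2 assume a: "a1 \<in> Uset n" "a2 \<in> Uset n"
  have "(\<lambda>b. cnj (if b = a1 then P a1 else 0) * (if b = a2 then P a2 else 0))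
      = (\<lambda>b. if b = a1 then (if a1 = a2 then 1 else 0) else 0)" (is "?f = _") using unitP by auto
  hence "sum ?f (Uset n) = (if a1 = a2 then 1 else 0)" using a finU by (simp only:) simp
  thus "(\<Sum>b\<in>Uset n. cnj (if b = a1 then P a1 else 0) * (if b = a2 then P a2 else 0)) = (if a1 = a2 then 1 else 0)"
    by simp
next
  fix a1 a2 assume a: "a1 \<in> Uset n" "a2 \<in> Uset n"
  have "(\<lambda>b. (if a1 = b then P b else 0) * cnj (if a2 = b then P b else 0))
      = (\<lambda>b. if b = a1 then (if a1 = a2 then 1 else 0) else 0)" (is "?f = _") using unitP by auto
  hence "sum ?f (Uset n) = (if a1 = a2 then 1 else 0)" using a finU by (simp only:) simp
  thus "(\<Sum>b\<in>Uset n. (if a1 = b then P b else 0) * cnj (if a2 = b then P b else 0)) = (if a1 = a2 then 1 else 0)"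
    by simp
next
  fix x :: nat and b a assume x: "x < 2 ^ n" and b: "b \<in> Uset n" and a: "a \<in> Uset n"
  have L: "(\<Sum>a'\<in>Uset n. (if b = a' then P a' else 0) * rho_c n c x a' a) = P b * rho_c n c x b a"
  proof -
    have "(\<lambda>a'. (if b = a' then P a' else 0) * rho_c n c x a' a) = (\<lambda>a'. if b = a' then P b * rho_c n c x b a else 0)"
      by auto
    thus ?thesis using b finU by (simp only:) (simp add: sum.delta)
  qed
  have R: "(\<Sum>b'\<in>Uset n. rho_t n t x b b' * (if b' = a then P a else 0)) = rho_t n t x b a * P a"
  proof -
    have "(\<lambda>b'. rho_t n t x b b' * (if b' = a then P a else 0)) = (\<lambda>b'. if b' = a then rho_t n t x b a * P a else 0)"
      by auto
    thus ?thesis using a finU by (simp only:) (simp add: sum.delta')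
  qed
  have "P b * rho_c n c x b a = rho_t n t x b a * P a"
  proof (cases "x \<in> Uset n")
    case True
    then show ?thesis by (auto simp: rho_c_def rho_t_def Uc_eq)
  next
    case False
    hence xv: "x \<in> Vset n" using lt_UV x by blast
    have "P b * rho_c n c x b a = P b * (cnj (P b) * P x * c_t n t b x) * cnj (cnj (P a) * P x * c_t n t a x)"
      using False xv by (simp add: rho_c_def Uc_eq Vc_eq c_all[OF b xv] c_all[OF a xv])
    also have "\<dots> = (P b * cnj (P b)) * (P x * cnj (P x)) * (c_t n t b x * cnj (c_t n t a x)) * P a"
      by (simp add: algebra_simps)
    also have "\<dots> = rho_t n t x b a * P a" using False xv unitP by (simp add: rho_t_def)
    finally show ?thesis .
  qed
  thus "(\<Sum>a'\<in>Uset n. (if b = a' then P a' else 0) * rho_c n c x a' a) =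
        (\<Sum>b'\<in>Uset n. rho_t n t x b b' * (if b' = a then P a else 0))"
    using L R by simp
qed

end

theorem lemma5p2:
  fixes n :: nat and c :: "nat \<Rightarrow> nat \<Rightarrow> complex"
  assumes "n \<ge> 1"
    and "admissible n c"
    and "\<And>i j. edge n i j \<Longrightarrow> c i j \<noteq> 0"
  shows "\<exists>t\<in>simplex n. unitarily_equiv n (Uc n c) (rho_c n c) (Uset n) (rho_t n t)"
proof -
  interpret adm n c using assms by unfold_locales auto
  show ?thesis using t_simplex main by blast
qed

end
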